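(* For integers $1\le k\le l$, the element $g_{l,k-1}$ divides $\{k-1\}_q!$, and there is an equality of ideals of $\mathbb{Z}[q,q^{-1}]$ $$\Big(\{l-k+1\}_q,\ \{k\}_q\,\frac{\{k-1\}_q!}{g_{l,k-1}}\Big)=\big(\tilde g_{l,k}\big),\qquad\text{where } \tilde g_{l,k}=\prod_{\substack{m\mid l-k+1\\ 1\le m\le k}}\Phi_m .$$
   Context: In $\mathbb{Z}[q,q^{-1}]$ set $\{i\}_q=q^i-1$, $\{i\}_{q,n}=\{i\}_q\cdots\{i-n+1\}_q$ (equal to $1$ for $n=0$), $\{n\}_q!=\{n\}_{q,n}$. For $0\le i\le k\le l$ set $h_{l,k,i}=\{l-i\}_{q,k-i}\{i\}_q!$ and $g_{l,k}=\mathrm{GCD}(h_{l,k,0},\dots,h_{l,k,k})$ (greatest common divisor in the UFD $\mathbb{Z}[q,q^{-1}]$, defined up to units $\pm q^j$). $(a,b)$ denotes the ideal generated by $a,b$. $\Phi_m$ is the $m$th cyclotomic polynomial. *)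

theory Defs
  imports Complex_Main "HOL-Computational_Algebra.Computational_Algebra"
begin

text \<open>Elements of Z[q,q^-1] occurring here are all polynomials; we represent them
 as integer polynomials in q. Laurent-ring notions are expressed via multiplication
 by powers of q (the units q^N).\<close>

definition qb :: "nat \<Rightarrow> int poly" where
  "qb i = monom 1 i - 1"

definition qfall :: "nat \<Rightarrow> nat \<Rightarrow> int poly" where
  "qfall i n = (\<Prod>j<n. qb (i - j))"

definition qfact :: "nat \<Rightarrow> int poly" where
  "qfact n = qfall n n"

definition hlki :: "nat \<Rightarrow> nat \<Rightarrow> nat \<Rightarrow> int poly" where
  "hlki l k i = qfall (l - i) (k - i) * qfact i"

definition glk :: "nat \<Rightarrow> nat \<Rightarrow> int poly" where
  "glk l k = Gcd (hlki l k ` {0..k})"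

definition cyclotomic :: "nat \<Rightarrow> int poly" where
  "cyclotomic m = (THE p. map_poly of_int p =
     (\<Prod>j\<in>{j. j < m \<and> coprime j m}. [:- cis (2 * pi * real j / real m), 1:]))"

definition gtilde :: "nat \<Rightarrow> nat \<Rightarrow> int poly" where
  "gtilde l k = (\<Prod>m\<in>{m. m dvd (l - k + 1) \<and> 1 \<le> m \<and> m \<le> k}. cyclotomic m)"

definition laurent_dvd :: "int poly \<Rightarrow> int poly \<Rightarrow> bool" where
  "laurent_dvd a b \<longleftrightarrow> (\<exists>N. a dvd monom 1 N * b)"

text \<open>Equality of ideals (a,b) = (c) in Z[q,q^-1]; tested on polynomial elements,
 which suffices since every Laurent polynomial is a unit times a polynomial.\<close>
definition laurent_ideal2_eq :: "int poly \<Rightarrow> int poly \<Rightarrow> int poly \<Rightarrow> bool" where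
  "laurent_ideal2_eq a b c \<longleftrightarrow>
     (\<forall>x. (\<exists>N u v. monom 1 N * x = u * a + v * b) \<longleftrightarrow> laurent_dvd c x)"

end

theory Submission
  imports Defs "HOL-Analysis.Analysis"
begin

abbreviation ofp :: "int poly \<Rightarrow> complex poly" where "ofp \<equiv> map_poly of_int"

lemma ofp_mult: "ofp (p * q) = ofp p * ofp q"
  by (intro poly_eqI) (simp add: coeff_map_poly coeff_mult of_int_sum)

lemma ofp_1[simp]: "ofp 1 = 1" by simp
lemma ofp_add: "ofp (p + q) = ofp p + ofp q"
  by (intro poly_eqI) (simp add: coeff_map_poly)
lemma ofp_diff: "ofp (p - q) = ofp p - ofp q"
  by (intro poly_eqI) (simp add: coeff_map_poly)
lemma ofp_prod: "ofp (\<Prod>x\<in>A. f x) = (\<Prod>x\<in>A. ofp (f x))"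
  by (induction A rule: infinite_finite_induct) (auto simp: ofp_mult)
lemma ofp_power: "ofp (p ^ n) = ofp p ^ n"
  by (induction n) (auto simp: ofp_mult)
lemma ofp_monom: "ofp (monom c n) = monom (of_int c) n"
  by (simp add: map_poly_monom)
lemma ofp_inj: "ofp p = ofp q \<Longrightarrow> p = q"
  by (intro poly_eqI) (metis coeff_map_poly of_int_0 of_int_eq_iff)
lemma ofp_eq0: "ofp p = 0 \<longleftrightarrow> p = 0"
  by (metis map_poly_0 ofp_inj)
lemma lead_ofp: "lead_coeff (ofp p) = of_int (lead_coeff p)"
  by (simp add: degree_map_poly coeff_map_poly)


definition w :: "nat \<Rightarrow> nat \<Rightarrow> complex" where "w j m = cis (2 * pi * real j / real m)"

lemma w_exp: "w j m = exp(2 * of_real pi * \<i> * of_nat j / of_nat m)"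
  unfolding w_def cis_conv_exp by (simp add: field_simps)

lemma xn_prod:
  assumes n: "n \<ge> 1"
  shows "(monom 1 n - 1 :: complex poly) = (\<Prod>j<n. [:- w j n, 1:])"
proof -
  define p :: "complex poly" where "p = monom 1 n - 1"
  have pz: "poly p z = z ^ n - 1" for z by (simp add: p_def poly_monom)
  have deg: "degree p = n"
  proof -
    have "p = monom 1 n + (- 1)" by (simp add: p_def)
    also have "degree \<dots> = degree (monom (1::complex) n)"
      by (rule degree_add_eq_left) (use n in \<open>simp add: degree_monom_eq\<close>)
    finally show ?thesis by (simp add: degree_monom_eq)
  qed
  have lc: "lead_coeff p = 1" using n deg unfolding p_def by simp
  have pd: "poly (pderiv p) z = of_nat n * z ^ (n - 1)" for z
    by (simp add: p_def pderiv_diff pderiv_monom poly_monom)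
  have rs: "rsquarefree p"
    unfolding rsquarefree_roots
  proof (intro allI notI)
    fix a assume "poly p a = 0 \<and> poly (pderiv p) a = 0"
    then have "a ^ n = 1" "of_nat n * a ^ (n - 1) = 0" using pz pd by auto
    moreover have "of_nat n \<noteq> (0::complex)" using n by simp
    ultimately have "a ^ (n - 1) = 0" by simp
    then have "a = 0" by simp
    then show False using \<open>a ^ n = 1\<close> n by (cases n) auto
  qed
  have "p = smult (lead_coeff p) (\<Prod>z|poly p z = 0. [:-z, 1:])"
    using complex_poly_decompose_rsquarefree[OF rs] by simp
  also have "{z. poly p z = 0} = {z. z ^ n = 1}" using pz by auto
  also have "\<dots> = (\<lambda>j. w j n) ` {..<n}"
    using complex_roots_unity[OF n] unfolding w_exp by auto
  also have "(\<Prod>z\<in>(\<lambda>j. w j n) ` {..<n}. [:-z, 1:]) = (\<Prod>j<n. [:- w j n, 1:])"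
    by (rule prod.reindex_cong[where l="\<lambda>j. w j n"])
       (use bij_betw_roots_unity[of n] in \<open>auto simp: bij_betw_def w_exp\<close>)
  finally show ?thesis using lc p_def by simp
qed


definition Pc :: "nat \<Rightarrow> complex poly" where
  "Pc m = (\<Prod>j\<in>{j. j < m \<and> coprime j m}. [:- cis (2 * pi * real j / real m), 1:])"

lemma w_scale:
  assumes "d dvd n" "n \<ge> 1"
  shows "w (j * (n div d)) n = w j d"
proof -
  have d: "d \<ge> 1" using assms by (metis dvd_0_left_iff less_one not_le not_one_le_zero)
  have "real (n div d) = real n / real d" using assms(1) by (simp add: real_of_nat_div)
  then have "2 * pi * real (j * (n div d)) / real n = 2 * pi * real j / real d"
    using d assms(2) by (simp add: field_simps)
  then show ?thesis unfolding w_def by simp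
qed

lemma bij_sigma:
  assumes n: "(n::nat) \<ge> 1"
  shows "bij_betw (\<lambda>(d, j). j * (n div d)) (SIGMA d:{d. d dvd n}. {j. j < d \<and> coprime j d}) {..<n}"
proof (rule bij_betwI')
  fix x y assume x: "x \<in> (SIGMA d:{d. d dvd n}. {j. j < d \<and> coprime j d})"
    and y: "y \<in> (SIGMA d:{d. d dvd n}. {j. j < d \<and> coprime j d})"
  obtain d j where xe: "x = (d, j)" "d dvd n" "j < d" "coprime j d" using x by auto
  obtain d' j' where ye: "y = (d', j')" "d' dvd n" "j' < d'" "coprime j' d'" using y by auto
  show "((case x of (d, j) \<Rightarrow> j * (n div d)) = (case y of (d, j) \<Rightarrow> j * (n div d))) = (x = y)"
  proof
    assume "(case x of (d, j) \<Rightarrow> j * (n div d)) = (case y of (d, j) \<Rightarrow> j * (n div d))"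
    then have e: "j * (n div d) = j' * (n div d')" using xe ye by simp
    obtain a where a: "n = d * a" using xe(2) by blast
    obtain b where b: "n = d' * b" using ye(2) by blast
    have d00: "d > 0" using xe(3) by linarith
    have d01: "d' > 0" using ye(3) by linarith
    note d0 = d00 d01
    have na1: "n div d = a" using a d0 by simp
    have na2: "n div d' = b" using b d0 by simp
    note na = na1 na2
    have "j * n * d' = (j * a) * d * d'" using a by (simp add: ac_simps)
    also have "\<dots> = (j' * b) * d * d'" using e na by simp
    also have "\<dots> = j' * n * d" using b by (simp add: ac_simps)
    finally have "j * n * d' = j' * n * d" .
    then have jd: "j * d' = j' * d" using n by simp
    have "d dvd j * d'" using jd by simp
    then have "d dvd d'" using xe(4) by (metis coprime_commute coprime_dvd_mult_right_iff mult.commute)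
    moreover have "d' dvd j' * d" using jd by (metis dvd_triv_right)
    then have "d' dvd d" using ye(4) by (metis coprime_commute coprime_dvd_mult_right_iff mult.commute)
    ultimately have "d = d'" by (simp add: dvd_antisym)
    then show "x = y" using jd xe ye d0 by simp
  qed simp
next
  fix x assume "x \<in> (SIGMA d:{d. d dvd n}. {j. j < d \<and> coprime j d})"
  then obtain d j where xe: "x = (d, j)" "d dvd n" "j < d" "coprime j d" by auto
  then have "d > 0" by auto
  obtain a where a: "n = d * a" using xe(2) by blast
  have "a > 0" using a n by (metis gr0I mult_0_right not_one_le_zero)
  have "j * a < d * a" using xe(3) \<open>a > 0\<close> by simp
  then show "(case x of (d, j) \<Rightarrow> j * (n div d)) \<in> {..<n}" using xe a \<open>d > 0\<close> by simp
next
  fix i assume i: "i \<in> {..<n}"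
  define g where "g = gcd i n"
  have g0: "g > 0" using n g_def by simp
  define d where "d = n div g"
  define j where "j = i div g"
  have gn: "g dvd n" "g dvd i" by (simp_all add: g_def)
  have dn: "d dvd n" unfolding d_def using gn by (metis dvd_div_mult_self dvd_triv_left)
  have ndd: "n div d = g"
  proof -
    obtain c where c: "n = g * c" using gn(1) by blast
    have "c > 0" using c n by (metis gr0I mult_0_right not_one_le_zero)
    have "d = c" unfolding d_def using c g0 by simp
    then show ?thesis using c \<open>c > 0\<close> by simp
  qed
  have jd: "j < d" unfolding j_def d_def using i gn g0 by (auto simp: div_less_iff_less_mult dvd_div_mult_self)
  have cop: "coprime j d" unfolding j_def d_def g_def using n by (intro div_gcd_coprime) simp
  have "j * (n div d) = i" using ndd gn unfolding j_def by simp
  then show "\<exists>x\<in>(SIGMA d:{d. d dvd n}. {j. j < d \<and> coprime j d}). i = (case x of (d, j) \<Rightarrow> j * (n div d))"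
    using dn jd cop by (intro bexI[of _ "(d, j)"]) auto
qed

lemma xn_Pc:
  assumes n: "n \<ge> 1"
  shows "(monom 1 n - 1 :: complex poly) = (\<Prod>d\<in>{d. d dvd n}. Pc d)"
proof -
  have fin: "finite {d. d dvd n}" using n by (simp add: finite_divisors_nat)
  have "(\<Prod>d\<in>{d. d dvd n}. Pc d) = (\<Prod>d\<in>{d. d dvd n}. \<Prod>j\<in>{j. j < d \<and> coprime j d}. [:- w j d, 1:])"
    unfolding Pc_def w_def by simp
  also have "\<dots> = (\<Prod>(d, j)\<in>(SIGMA d:{d. d dvd n}. {j. j < d \<and> coprime j d}). [:- w j d, 1:])"
    using fin by (subst prod.Sigma) auto
  also have "\<dots> = (\<Prod>(d, j)\<in>(SIGMA d:{d. d dvd n}. {j. j < d \<and> coprime j d}). [:- w (j * (n div d)) n, 1:])"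
    by (intro prod.cong refl) (auto intro: w_scale[OF _ n, symmetric])
  also have "\<dots> = (\<Prod>i<n. [:- w i n, 1:])"
    using prod.reindex_bij_betw[OF bij_sigma[OF n], of "\<lambda>i. [:- w i n, 1:]"]
    by (simp add: case_prod_beta' split_def)
  finally show ?thesis using xn_prod[OF n] by simp
qed


lemma deg_qb:
  assumes n: "n \<ge> 1"
  shows "degree (monom 1 n - 1 :: int poly) = n \<and> lead_coeff (monom 1 n - 1 :: int poly) = 1"
proof -
  have e: "(monom 1 n - 1 :: int poly) = monom 1 n + (- 1)" by simp
  have "degree (monom (1::int) n + (- 1)) = degree (monom (1::int) n)"
    by (rule degree_add_eq_left) (use n in \<open>simp add: degree_monom_eq\<close>)
  then have d: "degree (monom 1 n - 1 :: int poly) = n" unfolding e[symmetric] by (simp add: degree_monom_eq)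
  have "coeff (monom 1 n - 1 :: int poly) n = 1" using n by simp
  then show ?thesis using d by simp
qed

lemma int_div:
  fixes R f :: "int poly"
  assumes lc: "lead_coeff R = 1" and d: "ofp R dvd ofp f"
  shows "R dvd f"
proof -
  have R0: "R \<noteq> 0" using lc by auto
  obtain q r where qr: "pseudo_divmod f R = (q, r)" by (cases "pseudo_divmod f R")
  have e: "f = R * q + r" using pseudo_divmod(1)[OF R0 qr] lc by simp
  have dr: "r = 0 \<or> degree r < degree R" using pseudo_divmod(2)[OF R0 qr] .
  have "ofp r = ofp f - ofp R * ofp q" using e by (simp add: ofp_add ofp_mult)
  then have "ofp R dvd ofp r" using d by (simp add: dvd_diff)
  moreover have "degree (ofp r) = degree r" "degree (ofp R) = degree R"
    by (simp_all add: degree_map_poly)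
  ultimately have "r = 0"
  proof (cases "r = 0")
    case False
    assume a: "ofp R dvd ofp r" "degree (ofp r) = degree r" "degree (ofp R) = degree R"
    have "ofp r \<noteq> 0" using False ofp_eq0 by blast
    then have "degree R \<le> degree r" using divides_degree[OF a(1)] a(2,3) by simp
    then show ?thesis using dr by simp
  qed
  then show ?thesis using e by simp
qed

lemma Pc_split:
  assumes "m \<ge> 1"
  shows "(monom 1 m - 1 :: complex poly) = Pc m * (\<Prod>d\<in>{d. d dvd m \<and> d < m}. Pc d)"
proof -
  have eq: "{d. d dvd m} = insert m {d. d dvd m \<and> d < m}" using assms
    by (auto dest: dvd_imp_le)
  have "(\<Prod>d\<in>{d. d dvd m}. Pc d) = Pc m * (\<Prod>d\<in>{d. d dvd m \<and> d < m}. Pc d)"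
    unfolding eq by (rule prod.insert) simp_all
  then show ?thesis using xn_Pc[OF assms] by (simp only:)
qed

lemma cyc_exists: "m \<ge> 1 \<Longrightarrow> \<exists>p. ofp p = Pc m \<and> lead_coeff p = 1"
proof (induction m rule: less_induct)
  case (less m)
  define S where "S = {d. d dvd m \<and> d < m}"
  have "\<forall>d\<in>S. \<exists>p. ofp p = Pc d \<and> lead_coeff p = 1"
  proof
    fix d assume dS: "d \<in> S"
    then have dm: "d < m" "d dvd m" unfolding S_def by auto
    have "d \<noteq> 0" using dm(2) less.prems by (metis dvd_0_left_iff not_one_le_zero)
    then have "d \<ge> 1" by simp
    then show "\<exists>p. ofp p = Pc d \<and> lead_coeff p = 1" using less.IH dm(1) by blast
  qed
  then have "\<exists>f. \<forall>d\<in>S. ofp (f d) = Pc d \<and> lead_coeff (f d) = 1" by (rule bchoice)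
  then obtain f where f: "\<forall>d\<in>S. ofp (f d) = Pc d \<and> lead_coeff (f d) = 1" by blast
  define R where "R = (\<Prod>d\<in>S. f d)"
  have lcR: "lead_coeff R = 1" unfolding R_def lead_coeff_prod
    by (rule prod.neutral) (use f in blast)
  have oR: "ofp R = (\<Prod>d\<in>S. Pc d)" unfolding R_def ofp_prod
    by (rule prod.cong) (use f in auto)
  have om: "ofp (monom 1 m - 1) = (monom 1 m - 1 :: complex poly)"
    by (simp add: ofp_diff ofp_monom)
  have e: "ofp (monom 1 m - 1) = Pc m * ofp R"
    unfolding om oR S_def by (rule Pc_split[OF less.prems])
  then have "ofp R dvd ofp (monom 1 m - 1)" by (metis dvd_triv_right)
  then obtain Q where Q: "monom 1 m - 1 = R * Q" using int_div[OF lcR] by (meson dvdE)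
  have "ofp R * ofp Q = ofp R * Pc m"
    by (metis Q e ofp_mult mult.commute)
  moreover have "ofp R \<noteq> 0" using lcR ofp_eq0 by fastforce
  ultimately have oQ: "ofp Q = Pc m" by (metis mult_left_cancel)
  have "lead_coeff (monom 1 m - 1 :: int poly) = 1" by (rule conjunct2[OF deg_qb[OF less.prems]])
  then have "lead_coeff (R * Q) = 1" by (simp only: Q)
  then have "lead_coeff Q = 1" using lcR by (simp only: lead_coeff_mult mult_1)
  then show ?case using oQ by blast
qed

lemma cyc_prop:
  assumes "m \<ge> 1"
  shows "ofp (cyclotomic m) = Pc m" "lead_coeff (cyclotomic m) = 1"
proof -
  obtain p where p: "ofp p = Pc m" "lead_coeff p = 1" using cyc_exists[OF assms] by blast
  have "cyclotomic m = p" unfolding cyclotomic_def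
  proof (rule the_equality)
    show "ofp p = (\<Prod>j\<in>{j. j < m \<and> coprime j m}. [:- cis (2 * pi * real j / real m), 1:])"
      using p(1) unfolding Pc_def .
    fix x assume "ofp x = (\<Prod>j\<in>{j. j < m \<and> coprime j m}. [:- cis (2 * pi * real j / real m), 1:])"
    then have "ofp x = ofp p" using p(1) unfolding Pc_def by simp
    then show "x = p" by (rule ofp_inj)
  qed
  then show "ofp (cyclotomic m) = Pc m" "lead_coeff (cyclotomic m) = 1" using p by auto
qed

lemma qb_cyc:
  assumes "n \<ge> 1"
  shows "qb n = (\<Prod>d\<in>{d. d dvd n}. cyclotomic d)"
proof (rule ofp_inj)
  have "ofp (\<Prod>d\<in>{d. d dvd n}. cyclotomic d) = (\<Prod>d\<in>{d. d dvd n}. Pc d)"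
    unfolding ofp_prod using assms
    by (intro prod.cong refl cyc_prop(1)) (auto intro: Nat.gr0I)
  then show "ofp (qb n) = ofp (\<Prod>d\<in>{d. d dvd n}. cyclotomic d)"
    using xn_Pc[OF assms] by (simp add: qb_def ofp_diff ofp_monom)
qed

lemma root_Pc:
  assumes "poly (Pc m) z = 0"
  shows "\<exists>j. j < m \<and> coprime j m \<and> z = w j m"
proof -
  have "(\<Prod>j\<in>{j. j < m \<and> coprime j m}. z - w j m) = 0"
    using assms unfolding Pc_def w_def by (simp add: poly_prod)
  then obtain j where "j \<in> {j. j < m \<and> coprime j m}" "z - w j m = 0"
    by (subst (asm) prod_zero_iff) auto
  then show ?thesis by auto
qed

lemma w_pow:
  assumes m: "m \<ge> 1" and c: "coprime j m"
  shows "w j m ^ e = 1 \<longleftrightarrow> m dvd e"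
proof -
  have "w j m ^ e = cis (real e * (2 * pi * real j / real m))" unfolding w_def
    by (induction e) (simp_all add: cis_mult algebra_simps add_divide_distrib)
  also have "\<dots> = w (j * e) m" unfolding w_def by (simp add: field_simps)
  also have "\<dots> = 1 \<longleftrightarrow> m dvd j * e" unfolding w_exp by (rule complex_root_unity_eq_1[OF m])
  also have "\<dots> \<longleftrightarrow> m dvd e" using c
    by (metis coprime_commute coprime_dvd_mult_right_iff)
  finally show ?thesis .
qed

lemma ofp_dvd: "p dvd q \<Longrightarrow> ofp p dvd ofp q"
  by (metis dvdE dvd_triv_left ofp_mult)

lemma cyc_coprime:
  assumes m: "m \<ge> 1" and m': "m' \<ge> 1" and ne: "m \<noteq> m'"
  shows "coprime (cyclotomic m) (cyclotomic m')"
proof (rule coprimeI)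
  fix c assume c1: "c dvd cyclotomic m" and c2: "c dvd cyclotomic m'"
  show "is_unit c"
  proof (cases "degree c = 0")
    case True
    then obtain c0 where c0: "c = [:c0:]" by (metis degree_eq_zeroE)
    have "c0 dvd coeff (cyclotomic m) (degree (cyclotomic m))"
      using c1 unfolding c0 const_poly_dvd_iff by blast
    then have "c0 dvd 1" using cyc_prop(2)[OF m] by simp
    then show ?thesis unfolding c0 by (simp add: is_unit_const_poly_iff)
  next
    case False
    then have "\<not> constant (poly (ofp c))" by (simp add: constant_degree degree_map_poly)
    then obtain z where z: "poly (ofp c) z = 0" using fundamental_theorem_of_algebra by blast
    have "poly (Pc m) z = 0" using ofp_dvd[OF c1] z cyc_prop(1)[OF m]
      by (metis dvd_def mult_eq_0_iff poly_mult)
    then obtain j where j: "j < m" "coprime j m" "z = w j m" using root_Pc by blast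
    have "poly (Pc m') z = 0" using ofp_dvd[OF c2] z cyc_prop(1)[OF m']
      by (metis dvd_def mult_eq_0_iff poly_mult)
    then obtain j' where j': "j' < m'" "coprime j' m'" "z = w j' m'" using root_Pc by blast
    have "z ^ m = 1" using w_pow[OF m j(2), of m] j(3) by simp
    then have "m' dvd m" using w_pow[OF m' j'(2), of m] j'(3) by simp
    moreover have "z ^ m' = 1" using w_pow[OF m' j'(2), of m'] j'(3) by simp
    then have "m dvd m'" using w_pow[OF m j(2), of m'] j(3) by simp
    ultimately show ?thesis using ne dvd_antisym by blast
  qed
qed

definition comax :: "int poly \<Rightarrow> int poly \<Rightarrow> bool" where
  "comax x y \<longleftrightarrow> (\<exists>N u v. monom 1 N = u * x + v * y)"

lemma monom_mult1: "monom (1::int) a * monom 1 b = monom 1 (a + b)"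
  by (simp add: mult_monom)

lemma comax_sym: "comax x y \<Longrightarrow> comax y x"
  unfolding comax_def by (metis add.commute)

lemma comax_1: "comax x 1"
  unfolding comax_def by (rule exI[of _ 0], rule exI[of _ 0], rule exI[of _ 1]) simp

lemma comax_mult:
  assumes "comax x y" "comax x z" shows "comax x (y * z)"
proof -
  obtain N1 u1 v1 where 1: "monom 1 N1 = u1 * x + v1 * y" using assms(1) comax_def by blast
  obtain N2 u2 v2 where 2: "monom 1 N2 = u2 * x + v2 * z" using assms(2) comax_def by blast
  have "monom 1 (N1 + N2) = (u1 * x + v1 * y) * (u2 * x + v2 * z)"
    using 1 2 monom_mult1 by metis
  also have "\<dots> = (u1 * u2 * x + u1 * v2 * z + v1 * y * u2) * x + (v1 * v2) * (y * z)"
    by (simp add: algebra_simps)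
  finally show ?thesis unfolding comax_def by blast
qed

lemma comax_pow: "comax x y \<Longrightarrow> comax x (y ^ n)"
  by (induction n) (simp_all add: comax_1 comax_mult)

lemma comax_prod: "finite S \<Longrightarrow> (\<And>s. s \<in> S \<Longrightarrow> comax x (f s)) \<Longrightarrow> comax x (\<Prod>s\<in>S. f s)"
  by (induction S rule: finite_induct) (simp_all add: comax_1 comax_mult)

lemma comax_dvd:
  assumes "comax x y" "x' dvd x" "y' dvd y" shows "comax x' y'"
proof -
  obtain N u v where 1: "monom 1 N = u * x + v * y" using assms(1) comax_def by blast
  obtain a where a: "x = x' * a" using assms(2) by blast
  obtain b where b: "y = y' * b" using assms(3) by blast
  have "monom 1 N = (u * a) * x' + (v * b) * y'" using 1 a b by (simp add: algebra_simps)
  then show ?thesis unfolding comax_def by blast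
qed

definition Gs :: "nat \<Rightarrow> nat \<Rightarrow> int poly" where
  "Gs g r = (\<Sum>i<r. monom 1 (g * i))"

lemma Gs_geom: "(monom 1 g - 1) * Gs g r = monom 1 (g * r) - 1"
proof (induction r)
  case 0 then show ?case by (simp add: Gs_def)
next
  case (Suc r)
  have "Gs g (Suc r) = Gs g r + monom 1 (g * r)" by (simp add: Gs_def)
  then have "(monom 1 g - 1) * Gs g (Suc r) = monom 1 (g * r) - 1 + (monom 1 g - 1) * monom 1 (g * r)"
    using Suc by (simp add: algebra_simps)
  also have "\<dots> = monom 1 (g * Suc r) - 1"
    by (simp add: algebra_simps monom_mult1)
  finally show ?case .
qed

lemma Gs_split: "Gs g (a + b) = Gs g b + monom 1 (g * b) * Gs g a"
proof (induction a)
  case 0 then show ?case by (simp add: Gs_def)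
next
  case (Suc a)
  have "Gs g (Suc a + b) = Gs g (a + b) + monom 1 (g * (a + b))" by (simp add: Gs_def)
  also have "\<dots> = Gs g b + monom 1 (g * b) * (Gs g a + monom 1 (g * a))"
    using Suc by (simp add: algebra_simps monom_mult1)
  also have "Gs g a + monom 1 (g * a) = Gs g (Suc a)" by (simp add: Gs_def)
  finally show ?case .
qed

lemma Gs_1: "Gs g 1 = 1" by (simp add: Gs_def)

lemma Gs_comax: "1 \<le> a \<Longrightarrow> 1 \<le> b \<Longrightarrow> coprime a b \<Longrightarrow> comax (Gs g a) (Gs g b)"
proof (induction "a + b" arbitrary: a b rule: less_induct)
  case less
  show ?case
  proof (cases "a = 1 \<or> b = 1")
    case True
    then show ?thesis using comax_1 comax_sym Gs_1 by metis
  next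
    case False
    then have a2: "a \<ge> 2" "b \<ge> 2" using less.prems by auto
    have "a \<noteq> b"
    proof
      assume "a = b"
      then have "coprime a a" using less.prems(3) by simp
      then have "a = 1" by simp
      then show False using a2 by simp
    qed
    then consider "a > b" | "b > a" by linarith
    then show ?thesis
    proof cases
      case 1
      have "coprime (a - b) b" using less.prems(3) 1
        by (metis coprime_diff_one_left_nat coprime_commute coprime_iff_gcd_eq_1 gcd_diff1_nat less_imp_le)
      then have "comax (Gs g (a - b)) (Gs g b)" using less.hyps[of "a - b" b] 1 less.prems by auto
      then obtain N u v where e: "monom 1 N = u * Gs g (a - b) + v * Gs g b" unfolding comax_def by blast
      have sp: "Gs g a = Gs g b + monom 1 (g * b) * Gs g (a - b)"
        using Gs_split[of g "a - b" b] 1 by simp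
      have "monom 1 (N + g * b) = monom 1 (g * b) * (u * Gs g (a - b) + v * Gs g b)"
        using e monom_mult1 by (metis add.commute)
      also have "\<dots> = u * Gs g a + (v * monom 1 (g * b) - u) * Gs g b"
        using sp by (simp add: algebra_simps)
      finally show ?thesis unfolding comax_def by blast
    next
      case 2
      have "coprime (b - a) a" using less.prems(3) 2
        by (metis coprime_diff_one_left_nat coprime_commute coprime_iff_gcd_eq_1 gcd_diff1_nat less_imp_le)
      then have "comax (Gs g (b - a)) (Gs g a)" using less.hyps[of "b - a" a] 2 less.prems by auto
      then obtain N u v where e: "monom 1 N = u * Gs g (b - a) + v * Gs g a" unfolding comax_def by blast
      have sp: "Gs g b = Gs g a + monom 1 (g * a) * Gs g (b - a)"
        using Gs_split[of g "b - a" a] 2 by simp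
      have "monom 1 (N + g * a) = monom 1 (g * a) * (u * Gs g (b - a) + v * Gs g a)"
        using e monom_mult1 by (metis add.commute)
      also have "\<dots> = u * Gs g b + (v * monom 1 (g * a) - u) * Gs g a"
        using sp by (simp add: algebra_simps)
      finally have "comax (Gs g b) (Gs g a)" unfolding comax_def by blast
      then show ?thesis by (rule comax_sym)
    qed
  qed
qed

lemma cyc_nz: "m \<ge> 1 \<Longrightarrow> cyclotomic m \<noteq> 0"
  using cyc_prop(2) by fastforce

lemma qb_nz: "n \<ge> 1 \<Longrightarrow> qb n \<noteq> 0"
  using deg_qb unfolding qb_def by fastforce

lemma cyc_dvd_Gs:
  assumes d: "d \<ge> 1" and g: "g \<ge> 1" and gd: "g dvd d" and ndg: "\<not> d dvd g"
  shows "cyclotomic d dvd Gs g (d div g)"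
proof -
  have fin: "finite {e. e dvd d}" using d by (simp add: finite_divisors_nat)
  have "qb d = (\<Prod>e\<in>{e. e dvd d}. cyclotomic e)" by (rule qb_cyc[OF d])
  also have "\<dots> = (\<Prod>e\<in>{e. e dvd d} \<inter> {e. e dvd g}. cyclotomic e) *
      (\<Prod>e\<in>{e. e dvd d} - {e. e dvd g}. cyclotomic e)"
    by (rule prod.Int_Diff[OF fin])
  also have "{e. e dvd d} \<inter> {e. e dvd g} = {e. e dvd g}" using gd by (auto intro: dvd_trans)
  also have "(\<Prod>e\<in>{e. e dvd g}. cyclotomic e) = qb g" by (rule qb_cyc[OF g, symmetric])
  finally have 1: "qb d = qb g * (\<Prod>e\<in>{e. e dvd d} - {e. e dvd g}. cyclotomic e)" .
  have "qb d = qb g * Gs g (d div g)" unfolding qb_def using Gs_geom[of g "d div g"] gd by simp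
  then have "Gs g (d div g) = (\<Prod>e\<in>{e. e dvd d} - {e. e dvd g}. cyclotomic e)"
    using 1 qb_nz[OF g] by simp
  moreover have "cyclotomic d dvd (\<Prod>e\<in>{e. e dvd d} - {e. e dvd g}. cyclotomic e)"
    by (rule dvd_prodI) (use fin ndg in auto)
  ultimately show ?thesis by simp
qed

lemma cyc_comax:
  assumes d: "d \<ge> 1" and d': "d' \<ge> 1" and n1: "\<not> d dvd d'" and n2: "\<not> d' dvd d"
  shows "comax (cyclotomic d) (cyclotomic d')"
proof -
  define g where "g = gcd d d'"
  have g: "g \<ge> 1" using d unfolding g_def by (simp add: Suc_le_eq)
  have gd: "g dvd d" "g dvd d'" unfolding g_def by simp_all
  have ndg: "\<not> d dvd g" using n1 gd(2) dvd_trans by blast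
  have ndg': "\<not> d' dvd g" using n2 gd(1) dvd_trans by blast
  have "g \<le> d" "g \<le> d'" using gd d d' by (simp_all add: dvd_imp_le)
  then have "0 < d div g" "0 < d' div g" using g by (simp_all add: div_greater_zero_iff)
  then have a1: "d div g \<ge> 1" and b1: "d' div g \<ge> 1" by simp_all
  have cop: "coprime (d div g) (d' div g)" unfolding g_def using d by (intro div_gcd_coprime) simp
  have "comax (Gs g (d div g)) (Gs g (d' div g))" by (rule Gs_comax[OF a1 b1 cop])
  then show ?thesis
    by (rule comax_dvd) (use cyc_dvd_Gs[OF d g gd(1) ndg] cyc_dvd_Gs[OF d' g gd(2) ndg'] in auto)
qed

definition P :: "nat \<Rightarrow> (nat \<Rightarrow> nat) \<Rightarrow> int poly" where
  "P L e = (\<Prod>d\<in>{1..L}. cyclotomic d ^ e d)"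

lemma P_mult: "P L a * P L b = P L (\<lambda>d. a d + b d)"
  unfolding P_def by (simp add: prod.distrib power_add)

lemma P_0: "P L (\<lambda>d. 0) = 1" unfolding P_def by simp

lemma P_nz: "P L e \<noteq> 0"
  unfolding P_def using cyc_nz by (auto simp: prod_zero_iff)

lemma P_le: "(\<And>d. d \<in> {1..L} \<Longrightarrow> a d \<le> b d) \<Longrightarrow> P L b = P L a * P L (\<lambda>d. b d - a d)"
  unfolding P_mult by (unfold P_def, intro prod.cong refl) auto

lemma P_filter:
  assumes "{x \<in> {1..L}. Q x} = S"
  shows "(\<Prod>d\<in>S. cyclotomic d) = P L (\<lambda>d. if Q d then 1 else 0)"
proof -
  have "(\<Prod>d\<in>S. cyclotomic d) = (\<Prod>d\<in>{1..L}. if Q d then cyclotomic d else 1)"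
    using prod.inter_filter[of "{1..L}" cyclotomic Q] assms by simp
  also have "\<dots> = P L (\<lambda>d. if Q d then 1 else 0)" unfolding P_def
    by (intro prod.cong refl) simp
  finally show ?thesis .
qed

lemma qb_P:
  assumes "1 \<le> j" "j \<le> L"
  shows "qb j = P L (\<lambda>d. if d dvd j then 1 else 0)"
  unfolding qb_cyc[OF assms(1)] using assms
  by (intro P_filter) (auto intro: Nat.gr0I dest: dvd_imp_le)

lemma Suc_div_ind: "(d::nat) \<ge> 1 \<Longrightarrow> Suc b div d = b div d + (if d dvd Suc b then 1 else 0)"
  by (auto simp: div_Suc dvd_eq_mod_eq_0)

lemma range_P0:
  "a \<le> b \<longrightarrow> b \<le> L \<longrightarrow> (\<Prod>j\<in>{a<..b}. qb j) = P L (\<lambda>d. b div d - a div d)"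
proof (induction b)
  case 0 then show ?case using P_0 by simp
next
  case (Suc b)
  show ?case
  proof (cases "a = Suc b")
    case True then show ?thesis using P_0 by simp
  next
    case False
    show ?thesis
    proof (intro impI)
      assume ab: "a \<le> Suc b" and bL: "Suc b \<le> L"
      then have step: "a \<le> b" "b \<le> L" using False by auto
      have IH: "(\<Prod>j\<in>{a<..b}. qb j) = P L (\<lambda>d. b div d - a div d)" using Suc.IH step by simp
      have "{a<..Suc b} = insert (Suc b) {a<..b}" using step by auto
      then have "(\<Prod>j\<in>{a<..Suc b}. qb j) = qb (Suc b) * (\<Prod>j\<in>{a<..b}. qb j)" by simp
      also have "\<dots> = P L (\<lambda>d. if d dvd Suc b then 1 else 0) * P L (\<lambda>d. b div d - a div d)"
        using IH qb_P[of "Suc b" L] bL by simp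
      also have "\<dots> = P L (\<lambda>d. Suc b div d - a div d)"
        unfolding P_mult unfolding P_def
      proof (intro prod.cong refl)
        fix d assume "d \<in> {1..L}"
        then have "d \<ge> 1" by simp
        moreover have "a div d \<le> b div d" using step by (simp add: div_le_mono)
        ultimately show "cyclotomic d ^ ((if d dvd Suc b then 1 else 0) + (b div d - a div d)) =
            cyclotomic d ^ (Suc b div d - a div d)" using Suc_div_ind[of d b] by simp
      qed
      finally show "(\<Prod>j\<in>{a<..Suc b}. qb j) = P L (\<lambda>d. Suc b div d - a div d)" .
    qed
  qed
qed

lemma range_P: "a \<le> b \<Longrightarrow> b \<le> L \<Longrightarrow> (\<Prod>j\<in>{a<..b}. qb j) = P L (\<lambda>d. b div d - a div d)"
  using range_P0 by blast

lemma prod_rev: "(r::nat) \<le> u \<Longrightarrow> (\<Prod>j<r. f (u - j)) = (\<Prod>j\<in>{u - r<..u}. (f j :: int poly))"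
proof (induction r)
  case 0 then show ?case by simp
next
  case (Suc r)
  have "{u - Suc r<..u} = insert (u - r) {u - r<..u}" using Suc.prems by auto
  then show ?case using Suc by (simp add: mult.commute)
qed

lemma qfall_P: "r \<le> u \<Longrightarrow> u \<le> L \<Longrightarrow> qfall u r = P L (\<lambda>d. u div d - (u - r) div d)"
  unfolding qfall_def by (subst prod_rev) (auto intro: range_P)

lemma qfact_P: "i \<le> L \<Longrightarrow> qfact i = P L (\<lambda>d. i div d)"
  unfolding qfact_def using qfall_P[of i i L] by simp

lemma mult_P:
  assumes p: "prime p"
  shows "multiplicity p (P L e) = (\<Sum>d\<in>{1..L}. e d * multiplicity p (cyclotomic d))"
proof -
  have "multiplicity p (P L e) = (\<Sum>d\<in>{1..L}. multiplicity p (cyclotomic d ^ e d))"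
    unfolding P_def using p cyc_nz
    by (intro prime_elem_multiplicity_prod_distrib) auto
  also have "\<dots> = (\<Sum>d\<in>{1..L}. e d * multiplicity p (cyclotomic d))"
    using p cyc_nz by (intro sum.cong refl prime_elem_multiplicity_power_distrib) auto
  finally show ?thesis .
qed

lemma mult_unique:
  assumes p: "prime p" and d: "d \<ge> 1" and d': "d' \<ge> 1" and ne: "d \<noteq> d'"
    and m: "multiplicity p (cyclotomic d) > 0"
  shows "multiplicity p (cyclotomic d') = 0"
proof (rule ccontr)
  assume "multiplicity p (cyclotomic d') \<noteq> 0"
  then have "p dvd cyclotomic d'" using prime_multiplicity_gt_zero_iff[of p "cyclotomic d'"] p cyc_nz[OF d']
    by auto
  moreover have "p dvd cyclotomic d" using prime_multiplicity_gt_zero_iff[of p "cyclotomic d"] p cyc_nz[OF d] m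
    by auto
  ultimately have "is_unit p" using cyc_coprime[OF d d' ne] coprime_common_divisor by blast
  then show False using p not_prime_unit by blast
qed

lemma mult_P_single:
  assumes p: "prime p" and d0: "d0 \<in> {1..L}" and m: "multiplicity p (cyclotomic d0) > 0"
  shows "multiplicity p (P L e) = e d0 * multiplicity p (cyclotomic d0)"
proof -
  have "(\<Sum>d\<in>{1..L}. e d * multiplicity p (cyclotomic d)) =
      e d0 * multiplicity p (cyclotomic d0) + (\<Sum>d\<in>{1..L} - {d0}. e d * multiplicity p (cyclotomic d))"
    using d0 by (subst sum.remove[of _ d0]) auto
  also have "(\<Sum>d\<in>{1..L} - {d0}. e d * multiplicity p (cyclotomic d)) = 0"
    using mult_unique[OF p _ _ _ m] d0 by (intro sum.neutral) auto
  finally show ?thesis using mult_P[OF p] by simp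
qed

lemma mult_P_zero:
  assumes p: "prime p" and m: "\<forall>d\<in>{1..L}. multiplicity p (cyclotomic d) = 0"
  shows "multiplicity p (P L e) = 0"
  using mult_P[OF p] m by simp

lemma Gcd_P:
  fixes E :: "nat \<Rightarrow> nat \<Rightarrow> nat" and I :: "nat set"
  assumes fin: "finite I" and ne: "I \<noteq> {}"
  shows "\<exists>c. is_unit c \<and> Gcd ((\<lambda>i. P L (E i)) ` I) = P L (\<lambda>d. Min ((\<lambda>i. E i d) ` I)) * c"
proof -
  define \<mu> where "\<mu> = (\<lambda>d. Min ((\<lambda>i. E i d) ` I))"
  define g where "g = Gcd ((\<lambda>i. P L (E i)) ` I)"
  define D where "D = P L \<mu>"
  have muE: "\<mu> d \<le> E i d" if "i \<in> I" for i d unfolding \<mu>_def using fin that by simp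
  have muin: "\<exists>i\<in>I. E i d = \<mu> d" for d
  proof -
    have "Min ((\<lambda>i. E i d) ` I) \<in> (\<lambda>i. E i d) ` I" using fin ne by (intro Min_in) auto
    then obtain i where "i \<in> I" "Min ((\<lambda>i. E i d) ` I) = E i d" by blast
    then show ?thesis unfolding \<mu>_def by metis
  qed
  have Ddvd: "D dvd P L (E i)" if "i \<in> I" for i
    unfolding D_def using P_le[of L \<mu> "E i"] muE[OF that] by simp
  have Dg: "D dvd g" unfolding g_def by (rule Gcd_greatest) (use Ddvd in auto)
  obtain i0 where i0: "i0 \<in> I" using ne by blast
  have gdvd: "g dvd P L (E i)" if "i \<in> I" for i unfolding g_def by (rule Gcd_dvd) (use that in auto)
  have g0: "g \<noteq> 0" using gdvd[OF i0] P_nz by auto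
  have gD: "g dvd D"
  proof (rule multiplicity_le_imp_dvd[OF g0])
    fix p :: "int poly" assume p: "prime p"
    show "multiplicity p g \<le> multiplicity p D"
    proof (cases "\<exists>d0\<in>{1..L}. multiplicity p (cyclotomic d0) > 0")
      case True
      then obtain d0 where d0: "d0 \<in> {1..L}" "multiplicity p (cyclotomic d0) > 0" by blast
      obtain i1 where i1: "i1 \<in> I" "E i1 d0 = \<mu> d0" using muin by blast
      have "multiplicity p g \<le> multiplicity p (P L (E i1))"
        by (rule dvd_imp_multiplicity_le[OF gdvd[OF i1(1)] P_nz])
      also have "\<dots> = multiplicity p D" unfolding D_def
        using mult_P_single[OF p d0] i1(2) by simp
      finally show ?thesis .
    next
      case False
      then have "\<forall>d\<in>{1..L}. multiplicity p (cyclotomic d) = 0" by auto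
      then have "multiplicity p (P L (E i0)) = 0" using mult_P_zero[OF p] by blast
      moreover have "multiplicity p g \<le> multiplicity p (P L (E i0))"
        by (rule dvd_imp_multiplicity_le[OF gdvd[OF i0] P_nz])
      ultimately show ?thesis by simp
    qed
  qed
  obtain c where c: "g = D * c" using Dg by blast
  obtain c' where c': "D = g * c'" using gD by blast
  have e1: "D * (c * c') = (D * c) * c'" by (rule mult.assoc[symmetric])
  from c have e2: "g * c' = (D * c) * c'" by (rule arg_cong)
  have "D * (c * c') = D * 1" using e1 e2 c'[symmetric] by simp
  moreover have Dnz: "D \<noteq> 0" unfolding D_def by (rule P_nz)
  ultimately have "c * c' = 1" using mult_left_cancel[OF Dnz] by blast
  then have "1 = c * c'" by simp
  then have "is_unit c" by (rule dvdI)
  with c have "is_unit c \<and> g = D * c" by blast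
  then show ?thesis unfolding g_def D_def \<mu>_def by (rule exI)
qed

lemma comax_P:
  assumes "\<forall>d\<in>{1..L}. \<forall>d'\<in>{1..L}. a d > 0 \<longrightarrow> b d' > 0 \<longrightarrow> comax (cyclotomic d) (cyclotomic d')"
  shows "comax (P L a) (P L b)"
proof -
  have 1: "comax (cyclotomic d') (P L a)" if d': "d' \<in> {1..L}" "b d' > 0" for d'
    unfolding P_def
  proof (rule comax_prod)
    fix d assume d: "d \<in> {1..L}"
    show "comax (cyclotomic d') (cyclotomic d ^ a d)"
    proof (cases "a d = 0")
      case True then show ?thesis by (simp add: comax_1)
    next
      case False
      then have "comax (cyclotomic d) (cyclotomic d')" using assms d d' by auto
      then show ?thesis by (intro comax_pow) (rule comax_sym)
    qed
  qed simp
  show ?thesis unfolding P_def[of L b]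
  proof (rule comax_prod)
    fix d' assume d': "d' \<in> {1..L}"
    show "comax (P L a) (cyclotomic d' ^ b d')"
    proof (cases "b d' = 0")
      case True then show ?thesis by (simp add: comax_1)
    next
      case False
      then have "comax (cyclotomic d') (P L a)" using 1[OF d'] by auto
      then show ?thesis by (intro comax_pow) (rule comax_sym)
    qed
  qed simp
qed

lemma E_dvd:
  fixes n K i d :: nat
  assumes "d dvd n" "i \<le> K"
  shows "(n + K - i) div d - n div d + i div d = (K - i) div d + i div d"
proof -
  have "n + K - i = n + (K - i)" using assms by simp
  then have "(n + K - i) div d = n div d + (K - i) div d"
    using div_plus_div_distrib_dvd_left[OF assms(1)] by simp
  then show ?thesis by simp
qed

lemma split_div_le:
  fixes K i d :: nat
  assumes d: "(d::nat) \<ge> 1" and i: "i \<le> K"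
  shows "K div d \<le> (K - i) div d + i div d + 1"
    and "d dvd Suc K \<Longrightarrow> K div d \<le> (K - i) div d + i div d"
proof -
  define s where "s = (K - i) mod d + i mod d"
  have Ke: "K div d = (K - i) div d + i div d + s div d"
    unfolding s_def using div_add1_eq[of "K - i" i d] i by simp
  have "(K - i) mod d < d" "i mod d < d" using d by simp_all
  then have s2: "s < 2 * d" unfolding s_def by linarith
  then have "s div d < 2" by (rule less_mult_imp_div_less)
  then have "s div d \<le> 1" by simp
  then show "K div d \<le> (K - i) div d + i div d + 1" using Ke by simp
  assume dk: "d dvd Suc K"
  have "K = (K - i) + i" using i by simp
  then have smod: "s mod d = K mod d" unfolding s_def by (metis mod_add_eq)
  have Km: "K mod d = d - 1"
  proof -
    have "Suc K mod d = 0" using dk by simp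
    then have "Suc (K mod d) = d" by (simp add: mod_Suc split: if_splits)
    then show ?thesis by simp
  qed
  have "(K - i) mod d \<le> d - 1" "i mod d \<le> d - 1" using d by (simp_all add: less_Suc_eq_le[symmetric])
  then have sle: "s \<le> 2 * d - 2" unfolding s_def by simp
  have "s div d = 0"
  proof (rule ccontr)
    assume "s div d \<noteq> 0"
    then have sd: "s \<ge> d" using d by (simp add: div_eq_0_iff not_less)
    have "s = s div d * d + s mod d" by simp
    moreover have "s div d = 1" using \<open>s div d \<le> 1\<close> \<open>s div d \<noteq> 0\<close> by simp
    ultimately have "s = d + (d - 1)" using smod Km by simp
    then show False using sle d by simp
  qed
  then show "K div d \<le> (K - i) div d + i div d" using Ke by simp
qed

lemma mu_facts:
  fixes n K d :: nat
  defines "mu \<equiv> Min ((\<lambda>i. (n + K - i) div d - n div d + i div d) ` {0..K})"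
  assumes d: "d \<ge> 1"
  shows "mu \<le> K div d"
    and "d dvd n \<Longrightarrow> K div d \<le> mu + 1"
    and "d dvd n \<Longrightarrow> d dvd Suc K \<Longrightarrow> K div d \<le> mu"
    and "d dvd n \<Longrightarrow> d \<le> Suc K \<Longrightarrow> \<not> d dvd Suc K \<Longrightarrow> mu < K div d"
proof -
  let ?E = "\<lambda>i. (n + K - i) div d - n div d + i div d"
  have fin: "finite (?E ` {0..K})" "?E ` {0..K} \<noteq> {}" by auto
  have le: "mu \<le> ?E i" if "i \<le> K" for i unfolding mu_def using that by (intro Min_le) auto
  have "mu \<in> ?E ` {0..K}" unfolding mu_def using fin by (rule Min_in)
  then obtain i1 where i1: "i1 \<le> K" "mu = ?E i1" by auto
  show "mu \<le> K div d" using le[of K] by simp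
  show "d dvd n \<Longrightarrow> K div d \<le> mu + 1"
    using i1 E_dvd[of d n i1 K] split_div_le(1)[OF d i1(1)] by simp
  show "d dvd n \<Longrightarrow> d dvd Suc K \<Longrightarrow> K div d \<le> mu"
    using i1 E_dvd[of d n i1 K] split_div_le(2)[OF d i1(1)] by simp
  assume dn: "d dvd n" and dk: "d \<le> Suc K" and ndk: "\<not> d dvd Suc K"
  have "d \<noteq> Suc K" using ndk by auto
  then have dK: "d \<le> K" using dk by simp
  have "Suc K = (Suc K - d) + d" using dk by simp
  then have "Suc K div d = (Suc K - d) div d + 1" using d by (metis div_add_self2 not_one_le_zero)
  moreover have "Suc K div d = K div d" using Suc_div_ind[OF d, of K] ndk by simp
  moreover have "K - (d - 1) = Suc K - d" using d dK by simp
  moreover have "(d - 1) div d = 0" using d by simp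
  ultimately have "?E (d - 1) = K div d - 1" using E_dvd[of d n "d - 1" K] dn dK by simp
  moreover have "K div d \<ge> 1" using dK d by (simp add: Suc_le_eq div_greater_zero_iff)
  ultimately have "?E (d - 1) < K div d" by simp
  moreover have "d - 1 \<le> K" using dK by simp
  then have "mu \<le> ?E (d - 1)" by (rule le)
  ultimately show "mu < K div d" by linarith
qed

theorem lemma4p4:
  fixes k l :: nat
  assumes "1 \<le> k" and "k \<le> l"
  shows "laurent_dvd (glk l (k - 1)) (qfact (k - 1)) \<and>
    (\<forall>t N. glk l (k - 1) * t = monom 1 N * qfact (k - 1) \<longrightarrow>
        laurent_ideal2_eq (qb (l - k + 1)) (qb k * t) (gtilde l k))"
proof -
  define K where "K = k - 1"
  define n where "n = l - K"
  have k: "k = Suc K" using assms K_def by simp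
  have l: "l = n + K" using assms n_def K_def by simp
  have n1: "n \<ge> 1" using assms n_def K_def by simp
  have nk: "l - k + 1 = n" using assms n_def K_def by simp
  have km1: "k - 1 = K" using K_def by simp
  define E where "E = (\<lambda>i d. (n + K - i) div d - n div d + i div d)"
  define mu where "mu = (\<lambda>d. Min ((\<lambda>i. E i d) ` {0..K}))"
  have h: "hlki l K i = P l (E i)" if i: "i \<le> K" for i
  proof -
    have "qfall (l - i) (K - i) = P l (\<lambda>d. (l - i) div d - (l - i - (K - i)) div d)"
      using i l by (intro qfall_P) auto
    moreover have "l - i - (K - i) = n" using i l by simp
    moreover have "qfact i = P l (\<lambda>d. i div d)" using i l by (intro qfact_P) auto
    ultimately show ?thesis unfolding hlki_def E_def l by (simp add: P_mult)
  qed
  have glk: "glk l K = Gcd ((\<lambda>i. P l (E i)) ` {0..K})"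
    unfolding glk_def by (rule arg_cong[where f = Gcd]) (auto simp: h)
  obtain c where c: "is_unit c" "glk l K = P l mu * c"
    using Gcd_P[of "{0..K}" l E] unfolding glk mu_def by auto
  have hK: "hlki l K K = qfact K" unfolding hlki_def qfall_def by simp
  have part1: "laurent_dvd (glk l K) (qfact K)"
    unfolding laurent_dvd_def
    by (rule exI[of _ 0]) (auto simp: glk_def hK[symmetric] intro: Gcd_dvd)
  have muK: "mu d \<le> K div d" if "d \<ge> 1" for d
    using mu_facts(1)[OF that, of n K] unfolding mu_def E_def by simp
  define Ex where "Ex = P l (\<lambda>d. K div d - mu d)"
  have qK: "qfact K = P l mu * Ex"
    unfolding Ex_def using qfact_P[of K l] l muK by (intro trans[OF _ P_le]) auto
  have part2: "laurent_ideal2_eq (qb n) (qb k * t) (gtilde l k)"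
    if tN: "glk l K * t = monom 1 N * qfact K" for t N
  proof -
    have "P l mu * (c * t) = P l mu * (monom 1 N * Ex)"
      using tN unfolding c(2) qK by (simp add: ac_simps)
    then have ct: "c * t = monom 1 N * Ex" using P_nz by (simp add: mult_left_cancel)
    obtain c' where c': "1 = c * c'" using c(1) by (rule dvdE)
    define A where "A = (\<lambda>d::nat. if d dvd n then 1 else (0::nat))"
    define Kd where "Kd = (\<lambda>d::nat. if d dvd k then 1 else (0::nat))"
    define G where "G = (\<lambda>d::nat. if d dvd n \<and> d \<le> k then 1 else (0::nat))"
    define \<beta> where "\<beta> = (\<lambda>d. Kd d + (K div d - mu d))"
    have a: "qb n = P l A" unfolding A_def using n1 l by (intro qb_P) auto
    have qk: "qb k = P l Kd" unfolding Kd_def using assms by (intro qb_P) auto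
    have gt: "gtilde l k = P l G" unfolding gtilde_def nk G_def
      by (rule P_filter) (use assms in auto)
    define b0 where "b0 = qb k * Ex"
    have b0: "b0 = P l \<beta>" unfolding b0_def qk Ex_def P_mult \<beta>_def ..
    have cb: "c * (qb k * t) = monom 1 N * b0" unfolding b0_def using ct
      by (simp add: ac_simps)
    have f1: "G d \<le> A d" for d unfolding G_def A_def by simp
    have f2: "G d \<le> \<beta> d" if d: "d \<in> {1..l}" for d
    proof (cases "d dvd n \<and> d \<le> k")
      case dnk: True
      show ?thesis
      proof (cases "d dvd k")
        case True then show ?thesis unfolding G_def \<beta>_def Kd_def using dnk by simp
      next
        case False
        have "mu d < K div d"
          using mu_facts(4)[of d n K] d dnk False k unfolding mu_def E_def by auto
        then show ?thesis unfolding G_def \<beta>_def Kd_def using dnk False by simp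
      qed
    qed (auto simp: G_def)
    have f3: "d dvd n \<and> \<not> d \<le> k" if "A d - G d > 0" for d
      using that unfolding A_def G_def by (auto split: if_splits)
    have f4: "d \<le> k \<and> \<not> d dvd n" if d: "d \<in> {1..l}" and pos: "\<beta> d - G d > 0" for d
    proof -
      have dk: "d \<le> k"
      proof (rule ccontr)
        assume "\<not> d \<le> k"
        then have "K div d = 0" "\<not> d dvd k" using k assms by (auto dest: dvd_imp_le)
        then have "\<beta> d = 0" unfolding \<beta>_def Kd_def by simp
        then show False using pos by simp
      qed
      have "\<not> d dvd n"
      proof
        assume dn: "d dvd n"
        have "\<beta> d \<le> 1"
        proof (cases "d dvd k")
          case True
          then have "K div d \<le> mu d" using mu_facts(3)[of d n K] d dn k unfolding mu_def E_def by auto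
          then show ?thesis unfolding \<beta>_def Kd_def using True by simp
        next
          case False
          then have "K div d \<le> mu d + 1" using mu_facts(2)[of d n K] d dn unfolding mu_def E_def by auto
          then show ?thesis unfolding \<beta>_def Kd_def using False by simp
        qed
        moreover have "G d = 1" unfolding G_def using dn dk by simp
        ultimately show False using pos by simp
      qed
      then show ?thesis using dk by simp
    qed
    have aeq: "qb n = gtilde l k * P l (\<lambda>d. A d - G d)"
      unfolding a gt using f1 by (intro P_le) auto
    have beq: "b0 = gtilde l k * P l (\<lambda>d. \<beta> d - G d)"
      unfolding b0 gt using f2 by (intro P_le) auto
    have cm: "comax (P l (\<lambda>d. A d - G d)) (P l (\<lambda>d. \<beta> d - G d))"
    proof (rule comax_P, intro ballI impI)
      fix d d' assume d: "d \<in> {1..l}" and d': "d' \<in> {1..l}"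
        and p1: "A d - G d > 0" and p2: "\<beta> d' - G d' > 0"
      have 1: "d dvd n" "\<not> d \<le> k" using f3[OF p1] by auto
      have 2: "d' \<le> k" "\<not> d' dvd n" using f4[OF d' p2] by auto
      have "\<not> d dvd d'" using 1 2 d' by (auto dest: dvd_imp_le)
      moreover have "\<not> d' dvd d" using 1 2 dvd_trans by blast
      ultimately show "comax (cyclotomic d) (cyclotomic d')"
        using d d' by (intro cyc_comax) auto
    qed
    show ?thesis unfolding laurent_ideal2_eq_def laurent_dvd_def
    proof (intro allI iffI)
      fix x assume "\<exists>N u v. monom 1 N * x = u * qb n + v * (qb k * t)"
      then obtain N1 u v where e: "monom 1 N1 * x = u * qb n + v * (qb k * t)" by blast
      have "qb k * t = c' * (c * (qb k * t))" using c' by (simp add: ac_simps)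
      also have "\<dots> = gtilde l k * (c' * monom 1 N * P l (\<lambda>d. \<beta> d - G d))"
        unfolding cb beq by (simp add: ac_simps)
      finally have "gtilde l k dvd qb k * t" by simp
      moreover have "gtilde l k dvd qb n" unfolding aeq by simp
      ultimately have "gtilde l k dvd monom 1 N1 * x" unfolding e by simp
      then show "\<exists>N. gtilde l k dvd monom 1 N * x" by blast
    next
      fix x assume "\<exists>N. gtilde l k dvd monom 1 N * x"
      then obtain N1 y where y: "monom 1 N1 * x = gtilde l k * y" by blast
      obtain N2 U V where uv: "monom 1 N2 = U * P l (\<lambda>d. A d - G d) + V * P l (\<lambda>d. \<beta> d - G d)"
        using cm unfolding comax_def by blast
      have "monom 1 (N + N2 + N1) * x = monom 1 N * monom 1 N2 * (monom 1 N1 * x)"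
        by (simp add: monom_mult1 ac_simps)
      also have "\<dots> = monom 1 N * (U * P l (\<lambda>d. A d - G d) + V * P l (\<lambda>d. \<beta> d - G d)) * (gtilde l k * y)"
        unfolding uv y ..
      also have "\<dots> = (monom 1 N * y * U) * (gtilde l k * P l (\<lambda>d. A d - G d)) +
          (y * V) * (monom 1 N * (gtilde l k * P l (\<lambda>d. \<beta> d - G d)))"
        by (simp add: algebra_simps)
      also have "\<dots> = (monom 1 N * y * U) * qb n + (y * V * c) * (qb k * t)"
        unfolding aeq[symmetric] beq[symmetric] cb[symmetric] by (simp add: ac_simps)
      finally show "\<exists>N u v. monom 1 N * x = u * qb n + v * (qb k * t)" by blast
    qed
  qed
  show ?thesis unfolding km1 nk using part1 part2 by blast
qed

end
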